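(* Let $G$ be a finite $p$-group whose commutator subgroup $D(G)$ equals its Frattini subgroup and is elementary abelian, $D(G)\cong(\mathbb Z/p\mathbb Z)^n$ with $n\ge1$. Let $\phi:G/D(G)\to\mathrm{Aut}(D(G))$ be the conjugation action $\phi(y)(g)=s(y)^{-1}gs(y)$ (for any lift $s(y)\in G$ of $y$), and fix an $\mathbb F_p$-basis $g_1,\dots,g_n$ of $D(G)$ in which each $\phi(y)$ is lower unitriangular: $\phi(y)(g_j)=g_j+\sum_{i>j}\ell_{i,j}(y)g_i$ with $\ell_{i,j}(y)\in\mathbb F_p$ (additive notation in $D(G)$). Then the following are equivalent: (1) $\Lambda_i(G)/\Lambda_{i-1}(G)\cong\mathbb Z/p\mathbb Z$ for every $i\in\{1,\dots,n\}$, so that $\{e\}=\Lambda_0(G)\subsetneq\Lambda_1(G)\subsetneq\dots\subsetneq\Lambda_n(G)=D(G)$; (2) for every $i\in\{1,\dots,n\}$, $\Lambda_i(G)$ is the $\mathbb F_p$-span of $g_{n-i+1},\dots,g_n$; (3) $n=1$, or $n\ge2$ and for every $i\in\{1,\dots,n-1\}$ the linear form $\ell_{i+1,i}:G/D(G)\to\mathbb F_p$ is nonzero.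
   Context: For a group $G$, define $\Lambda_0(G)=\{e\}$ and, for $i\ge1$, $\Lambda_i(G)=\pi_{i-1}^{-1}\big(Z(G/\Lambda_{i-1}(G))\cap D(G/\Lambda_{i-1}(G))\big)$ where $\pi_{i-1}:G\to G/\Lambda_{i-1}(G)$ is the canonical map, $Z$ denotes the center and $D$ the commutator subgroup. This gives an ascending chain of characteristic subgroups of $G$ contained in $D(G)$. Each $\ell_{i+1,i}$ is a group homomorphism $G/D(G)\to\mathbb F_p$. *)

theory Defs
  imports "HOL-Algebra.Algebra"
begin

definition grp_center :: "('a, 'b) monoid_scheme \<Rightarrow> 'a set" where
  "grp_center G = {z \<in> carrier G. \<forall>x \<in> carrier G. z \<otimes>\<^bsub>G\<^esub> x = x \<otimes>\<^bsub>G\<^esub> z}"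

definition maximal_subgroup :: "'a set \<Rightarrow> ('a, 'b) monoid_scheme \<Rightarrow> bool" where
  "maximal_subgroup H G \<longleftrightarrow> subgroup H G \<and> H \<noteq> carrier G \<and>
     (\<forall>K. subgroup K G \<and> H \<subseteq> K \<longrightarrow> K = H \<or> K = carrier G)"

definition frattini :: "('a, 'b) monoid_scheme \<Rightarrow> 'a set" where
  "frattini G = carrier G \<inter> \<Inter> {H. maximal_subgroup H G}"

fun Lambda :: "('a, 'b) monoid_scheme \<Rightarrow> nat \<Rightarrow> 'a set" where
  "Lambda G 0 = {\<one>\<^bsub>G\<^esub>}"
| "Lambda G (Suc i) =
     {x \<in> carrier G. Lambda G i #>\<^bsub>G\<^esub> x \<in>
        grp_center (G Mod Lambda G i) \<inter> derived (G Mod Lambda G i) (carrier (G Mod Lambda G i))}"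

definition ordprod :: "('a, 'b) monoid_scheme \<Rightarrow> (nat \<Rightarrow> 'a) \<Rightarrow> (nat \<Rightarrow> nat) \<Rightarrow> nat list \<Rightarrow> 'a" where
  "ordprod G g a is = foldr (\<lambda>i acc. (g i [^]\<^bsub>G\<^esub> a i) \<otimes>\<^bsub>G\<^esub> acc) is \<one>\<^bsub>G\<^esub>"

text \<open>g 1, ..., g n is an F_p-basis of the elementary abelian subgroup D:
  every element of D is uniquely g 1 [^] a 1 \<otimes> ... \<otimes> g n [^] a n with 0 \<le> a i < p.\<close>
definition fp_basis :: "('a, 'b) monoid_scheme \<Rightarrow> nat \<Rightarrow> 'a set \<Rightarrow> nat \<Rightarrow> (nat \<Rightarrow> 'a) \<Rightarrow> bool" where
  "fp_basis G p D n g \<longleftrightarrow> (\<forall>i \<in> {1..n}. g i \<in> D) \<and>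
     bij_betw (\<lambda>a. ordprod G g a [1..<Suc n]) ({1..n} \<rightarrow>\<^sub>E {..<p}) D"

end

theory Submission imports Defs begin

declare upt_Suc[simp del]

locale fsetup = group G for G (structure) +
  fixes p n :: nat and g :: "nat \<Rightarrow> 'a" and D :: "'a set"
  assumes Dsub: "subgroup D G"
  and Dab: "\<forall>x\<in>D. \<forall>y\<in>D. x \<otimes> y = y \<otimes> x"
  and Dexp: "\<forall>x\<in>D. x [^] p = \<one>"
  and gD: "\<forall>i\<in>{1..n}. g i \<in> D"
  and pprime: "Factorial_Ring.prime p"
begin

lemma DG: "x \<in> D \<Longrightarrow> x \<in> carrier G"
  using subgroup.subset[OF Dsub] by blast

lemma Dmult: "x \<in> D \<Longrightarrow> y \<in> D \<Longrightarrow> x \<otimes> y \<in> D"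
  by (rule subgroup.m_closed[OF Dsub])

lemma Done: "\<one> \<in> D"
  by (rule subgroup.one_closed[OF Dsub])

lemma Dinv: "x \<in> D \<Longrightarrow> inv x \<in> D"
  by (rule subgroup.m_inv_closed[OF Dsub])

lemma pow_D: "x \<in> D \<Longrightarrow> x [^] (m::nat) \<in> D"
  by (induction m) (auto simp: Done Dmult)

lemma op_closed: "set xs \<subseteq> {1..n} \<Longrightarrow> ordprod G g a xs \<in> D"
  by (induction xs) (auto simp: ordprod_def Done Dmult pow_D gD)

lemma op_Cons: "ordprod G g a (x # xs) = g x [^] a x \<otimes> ordprod G g a xs"
  by (simp add: ordprod_def)

lemma op_Nil: "ordprod G g a [] = \<one>"
  by (simp add: ordprod_def)

lemma op_mult: "set xs \<subseteq> {1..n} \<Longrightarrow>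
   ordprod G g a xs \<otimes> ordprod G g b xs = ordprod G g (\<lambda>i. a i + b i) xs"
proof (induction xs)
  case Nil thus ?case by (simp add: op_Nil)
next
  case (Cons x xs)
  hence x: "x \<in> {1..n}" and xs: "set xs \<subseteq> {1..n}" by auto
  define A where "A = ordprod G g a xs"
  define B where "B = ordprod G g b xs"
  define u where "u = g x [^] a x"
  define v where "v = g x [^] b x"
  have AD: "A \<in> D" "B \<in> D" unfolding A_def B_def using op_closed[OF xs] by auto
  have vD: "v \<in> D" unfolding v_def using pow_D gD x by auto
  have gxc: "g x \<in> carrier G" using gD x DG by auto
  have uc: "u \<in> carrier G" and vc: "v \<in> carrier G" unfolding u_def v_def using gxc by auto
  have Ac: "A \<in> carrier G" and Bc: "B \<in> carrier G" using AD DG by auto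
  have com: "A \<otimes> v = v \<otimes> A" using Dab AD vD by blast
  have "(u \<otimes> A) \<otimes> (v \<otimes> B) = u \<otimes> ((A \<otimes> v) \<otimes> B)"
    using uc vc Ac Bc by (simp add: m_assoc)
  also have "\<dots> = u \<otimes> ((v \<otimes> A) \<otimes> B)" by (simp only: com)
  also have "\<dots> = (u \<otimes> v) \<otimes> (A \<otimes> B)"
    using uc vc Ac Bc by (simp add: m_assoc)
  also have "u \<otimes> v = g x [^] (a x + b x)" unfolding u_def v_def using gxc by (rule nat_pow_mult)
  also have "A \<otimes> B = ordprod G g (\<lambda>i. a i + b i) xs" unfolding A_def B_def using Cons(1)[OF xs] .
  finally show ?case unfolding op_Cons A_def B_def u_def v_def .
qed

lemma pow_mod: "x \<in> D \<Longrightarrow> x [^] (m::nat) = x [^] (m mod p)"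
proof -
  assume x: "x \<in> D"
  have xc: "x \<in> carrier G" using DG x .
  have e: "m = m mod p + p * (m div p)" by simp
  have "x [^] m = x [^] (m mod p + p * (m div p))" using e by metis
  also have "\<dots> = x [^] (m mod p) \<otimes> (x [^] p) [^] (m div p)"
    using xc nat_pow_mult[of x "m mod p" "p * (m div p)"] nat_pow_pow[of x p "m div p"] by metis
  also have "\<dots> = x [^] (m mod p)" using Dexp x xc by simp
  finally show ?thesis .
qed

lemma op_cong: "(\<And>i. i \<in> set xs \<Longrightarrow> a i = b i) \<Longrightarrow> ordprod G g a xs = ordprod G g b xs"
  by (induction xs) (auto simp: op_Cons op_Nil)

lemma op_mod: "set xs \<subseteq> {1..n} \<Longrightarrow> ordprod G g a xs = ordprod G g (\<lambda>i. a i mod p) xs"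
proof (induction xs)
  case Nil thus ?case by (simp add: op_Nil)
next
  case (Cons x xs)
  have "g x [^] a x = g x [^] (a x mod p)" using Cons(2) gD by (intro pow_mod) auto
  thus ?case using Cons by (simp add: op_Cons)
qed

lemma op_zero: "(\<And>i. i \<in> set xs \<Longrightarrow> a i = 0) \<Longrightarrow> ordprod G g a xs = \<one>"
  by (induction xs) (auto simp: op_Cons op_Nil)

lemma op_append: "set xs \<subseteq> {1..n} \<Longrightarrow> set ys \<subseteq> {1..n} \<Longrightarrow>
   ordprod G g a (xs @ ys) = ordprod G g a xs \<otimes> ordprod G g a ys"
proof (induction xs)
  case Nil thus ?case using op_closed DG by (simp add: op_Nil)
next
  case (Cons x xs)
  thus ?case using op_closed DG gD pow_D by (simp add: op_Cons m_assoc)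
qed

lemma op_pow: "set xs \<subseteq> {1..n} \<Longrightarrow> (ordprod G g a xs) [^] (m::nat) = ordprod G g (\<lambda>i. m * a i) xs"
proof (induction m)
  case 0 thus ?case by (simp add: op_zero)
next
  case (Suc m)
  thus ?case by (simp add: op_mult add.commute)
qed

lemma op_delta: "set xs \<subseteq> {1..n} \<Longrightarrow> distinct xs \<Longrightarrow>
   ordprod G g (\<lambda>i. if i = j then 1 else 0) xs = (if j \<in> set xs then g j else \<one>)"
proof (induction xs)
  case Nil thus ?case by (simp add: op_Nil)
next
  case (Cons x xs)
  thus ?case using gD DG by (auto simp: op_Cons)
qed


lemma conj_mult: "s \<in> carrier G \<Longrightarrow> x \<in> carrier G \<Longrightarrow> y \<in> carrier G \<Longrightarrow>
  inv s \<otimes> (x \<otimes> y) \<otimes> s = (inv s \<otimes> x \<otimes> s) \<otimes> (inv s \<otimes> y \<otimes> s)"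
proof -
  assume c: "s \<in> carrier G" "x \<in> carrier G" "y \<in> carrier G"
  have "(inv s \<otimes> x \<otimes> s) \<otimes> (inv s \<otimes> y \<otimes> s) = inv s \<otimes> x \<otimes> (s \<otimes> inv s) \<otimes> y \<otimes> s"
    using c by (simp only: m_assoc inv_closed m_closed)
  also have "\<dots> = inv s \<otimes> (x \<otimes> y) \<otimes> s" using c by (simp add: m_assoc)
  finally show ?thesis by simp
qed

lemma conj_pow: "s \<in> carrier G \<Longrightarrow> x \<in> carrier G \<Longrightarrow>
  inv s \<otimes> (x [^] (m::nat)) \<otimes> s = (inv s \<otimes> x \<otimes> s) [^] m"
proof (induction m)
  case 0 thus ?case by simp
next
  case (Suc m)
  have "inv s \<otimes> (x [^] Suc m) \<otimes> s = inv s \<otimes> (x [^] m \<otimes> x) \<otimes> s" by simp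
  also have "\<dots> = (inv s \<otimes> x [^] m \<otimes> s) \<otimes> (inv s \<otimes> x \<otimes> s)"
    using Suc by (intro conj_mult) auto
  finally show ?case using Suc by simp
qed

lemma op_tail: "j \<in> {1..n} \<Longrightarrow>
  ordprod G g c [Suc j..<Suc n] = ordprod G g (\<lambda>k. if j < k then c k else 0) [1..<Suc n]"
proof -
  assume j: "j \<in> {1..n}"
  have cc: "ordprod G g c [Suc j..<Suc n] \<in> carrier G" using j by (intro DG op_closed) auto
  have e: "[1..<Suc n] = [1..<Suc j] @ [Suc j..<Suc n]"
    using j upt_add_eq_append[of 1 "Suc j" "n - j"] by auto
  have "ordprod G g (\<lambda>k. if j < k then c k else 0) [1..<Suc n]
      = ordprod G g (\<lambda>k. if j < k then c k else 0) [1..<Suc j] \<otimes>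
        ordprod G g (\<lambda>k. if j < k then c k else 0) [Suc j..<Suc n]"
    unfolding e using j by (intro op_append) auto
  also have "ordprod G g (\<lambda>k. if j < k then c k else 0) [1..<Suc j] = \<one>"
    by (intro op_zero) auto
  also have "ordprod G g (\<lambda>k. if j < k then c k else 0) [Suc j..<Suc n] = ordprod G g c [Suc j..<Suc n]"
    by (intro op_cong) auto
  finally show ?thesis using cc by (simp del: upt_Suc)
qed

definition CC :: "(nat \<Rightarrow> nat \<Rightarrow> nat) \<Rightarrow> nat \<Rightarrow> nat \<Rightarrow> nat" where
  "CC l j k = (if k = j then 1 else 0) + (if j < k then l k j else 0)"

lemma conj_gen:
  assumes s: "s \<in> carrier G" and j: "j \<in> {1..n}"
    and hyp: "inv s \<otimes> g j \<otimes> s = g j \<otimes> ordprod G g (\<lambda>i. l i j) [Suc j..<Suc n]"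
  shows "inv s \<otimes> g j \<otimes> s = ordprod G g (CC l j) [1..<Suc n]"
proof -
  have "g j = ordprod G g (\<lambda>i. if i = j then 1 else 0) [1..<Suc n]"
  proof -
    have h: "set [1..<Suc n] \<subseteq> {1..n}" "distinct [1..<Suc n]" "j \<in> set [1..<Suc n]" using j by auto
    show ?thesis using op_delta[OF h(1,2), of j] h(3) by (simp del: upt_Suc)
  qed
  hence "inv s \<otimes> g j \<otimes> s = ordprod G g (\<lambda>i. if i = j then 1 else 0) [1..<Suc n] \<otimes>
     ordprod G g (\<lambda>k. if j < k then l k j else 0) [1..<Suc n]"
    using hyp op_tail[OF j, of "\<lambda>i. l i j"] by simp
  also have "\<dots> = ordprod G g (CC l j) [1..<Suc n]"
    unfolding CC_def by (intro op_mult) auto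
  finally show ?thesis .
qed

lemma conj_op:
  assumes s: "s \<in> carrier G"
    and hyp: "\<forall>j\<in>{1..n}. inv s \<otimes> g j \<otimes> s = g j \<otimes> ordprod G g (\<lambda>i. l i j) [Suc j..<Suc n]"
    and xs: "set xs \<subseteq> {1..n}"
  shows "inv s \<otimes> ordprod G g a xs \<otimes> s
     = ordprod G g (\<lambda>k. sum_list (map (\<lambda>i. a i * CC l i k) xs)) [1..<Suc n]"
  using xs
proof (induction xs)
  case Nil thus ?case using s by (simp add: op_Nil op_zero)
next
  case (Cons x xs)
  hence x: "x \<in> {1..n}" and xs: "set xs \<subseteq> {1..n}" by auto
  have gxc: "g x \<in> carrier G" using gD x DG by auto
  have rc: "ordprod G g a xs \<in> carrier G" using op_closed[OF xs] DG by auto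
  have "inv s \<otimes> ordprod G g a (x # xs) \<otimes> s
     = (inv s \<otimes> g x [^] a x \<otimes> s) \<otimes> (inv s \<otimes> ordprod G g a xs \<otimes> s)"
    unfolding op_Cons using s gxc rc by (intro conj_mult) auto
  also have "inv s \<otimes> g x [^] a x \<otimes> s = (inv s \<otimes> g x \<otimes> s) [^] a x"
    using s gxc by (rule conj_pow)
  also have "inv s \<otimes> g x \<otimes> s = ordprod G g (CC l x) [1..<Suc n]"
    using conj_gen[OF s x] hyp x by blast
  also have "(ordprod G g (CC l x) [1..<Suc n]) [^] a x = ordprod G g (\<lambda>k. a x * CC l x k) [1..<Suc n]"
    by (intro op_pow) auto
  also have "inv s \<otimes> ordprod G g a xs \<otimes> s = ordprod G g (\<lambda>k. sum_list (map (\<lambda>i. a i * CC l i k) xs)) [1..<Suc n]"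
    using Cons(1)[OF xs] .
  also have "ordprod G g (\<lambda>k. a x * CC l x k) [1..<Suc n] \<otimes> \<dots>
     = ordprod G g (\<lambda>k. a x * CC l x k + sum_list (map (\<lambda>i. a i * CC l i k) xs)) [1..<Suc n]"
    by (intro op_mult) auto
  finally show ?case by simp
qed

lemma sum_CC: "k \<in> {1..n} \<Longrightarrow> sum_list (map (\<lambda>i. a i * CC l i k) [1..<Suc n])
   = a k + (\<Sum>i\<in>{1..n}. if i < k then a i * l k i else 0)"
proof -
  assume k: "k \<in> {1..n}"
  have "sum_list (map (\<lambda>i. a i * CC l i k) [1..<Suc n]) = (\<Sum>i\<in>{1..n}. a i * CC l i k)"
    by (simp del: upt_Suc add: sum_list_distinct_conv_sum_set atLeastLessThanSuc_atLeastAtMost)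
  also have "\<dots> = (\<Sum>i\<in>{1..n}. (if i = k then a i else 0) + (if i < k then a i * l k i else 0))"
    by (intro sum.cong) (auto simp: CC_def)
  also have "\<dots> = a k + (\<Sum>i\<in>{1..n}. if i < k then a i * l k i else 0)"
    using k by (simp add: sum.distrib)
  finally show ?thesis .
qed

lemma kappa_op:
  assumes s: "s \<in> carrier G"
    and hyp: "\<forall>j\<in>{1..n}. inv s \<otimes> g j \<otimes> s = g j \<otimes> ordprod G g (\<lambda>i. l i j) [Suc j..<Suc n]"
  shows "inv s \<otimes> ordprod G g a [1..<Suc n] \<otimes> s \<otimes> inv (ordprod G g a [1..<Suc n])
     = ordprod G g (\<lambda>k. (\<Sum>i\<in>{1..n}. if i < k then a i * l k i else 0) mod p) [1..<Suc n]"
proof -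
  define N where "N = (\<lambda>k::nat. (\<Sum>i\<in>{1..n}. if i < k then a i * l k i else (0::nat)))"
  define XX where "XX = ordprod G g a [1..<Suc n]"
  define YY where "YY = ordprod G g N [1..<Suc n]"
  have XD: "XX \<in> D" and YD: "YY \<in> D" unfolding XX_def YY_def by (auto intro!: op_closed)
  have Xc: "XX \<in> carrier G" and Yc: "YY \<in> carrier G" using XD YD DG by auto
  have "inv s \<otimes> XX \<otimes> s = ordprod G g (\<lambda>k. sum_list (map (\<lambda>i. a i * CC l i k) [1..<Suc n])) [1..<Suc n]"
    unfolding XX_def using conj_op[OF s hyp, of "[1..<Suc n]" a] by (simp add: atLeastLessThanSuc_atLeastAtMost)
  also have "\<dots> = ordprod G g (\<lambda>k. a k + N k) [1..<Suc n]"
  proof (intro op_cong)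
    fix k assume "k \<in> set [1..<Suc n]"
    hence "k \<in> {1..n}" by auto
    thus "sum_list (map (\<lambda>i. a i * CC l i k) [1..<Suc n]) = a k + N k"
      unfolding N_def by (rule sum_CC)
  qed
  also have "\<dots> = XX \<otimes> YY" unfolding XX_def YY_def by (intro op_mult[symmetric]) auto
  finally have "inv s \<otimes> XX \<otimes> s \<otimes> inv XX = XX \<otimes> YY \<otimes> inv XX" by simp
  also have "\<dots> = YY \<otimes> XX \<otimes> inv XX" using Dab XD YD by metis
  also have "\<dots> = YY" using Xc Yc by (simp add: m_assoc)
  also have "YY = ordprod G g (\<lambda>k. N k mod p) [1..<Suc n]" unfolding YY_def by (intro op_mod) auto
  finally show ?thesis unfolding XX_def N_def .
qed

end

lemma (in group) cancel_l1: "x \<in> carrier G \<Longrightarrow> z \<in> carrier G \<Longrightarrow> x \<otimes> (inv x \<otimes> z) = z"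
  by (simp add: m_assoc[symmetric])

lemma (in group) cancel_l2: "x \<in> carrier G \<Longrightarrow> z \<in> carrier G \<Longrightarrow> inv x \<otimes> (x \<otimes> z) = z"
  by (simp add: m_assoc[symmetric])

lemma (in group) coset_eq_iff:
  assumes H: "subgroup H G" and a: "a \<in> carrier G" and b: "b \<in> carrier G"
  shows "(H #> a = H #> b) \<longleftrightarrow> a \<otimes> inv b \<in> H"
proof
  assume "H #> a = H #> b"
  hence "a \<in> H #> b" using rcos_self[OF a H] by simp
  thus "a \<otimes> inv b \<in> H" using subgroup.rcos_module_imp[OF H is_group b] by blast
next
  assume "a \<otimes> inv b \<in> H"
  hence "a \<in> H #> b" using subgroup.rcos_module_rev[OF H is_group b a] by blast
  thus "H #> a = H #> b" using repr_independence[OF _ b H] by simp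
qed

lemma (in group) subgroup_inv_iff:
  assumes H: "subgroup H G" and a: "a \<in> carrier G"
  shows "inv a \<in> H \<longleftrightarrow> a \<in> H"
  using subgroup.m_inv_closed[OF H, of a] subgroup.m_inv_closed[OF H, of "inv a"] a by auto

lemma (in group) center_iff:
  assumes N: "L \<lhd> G" and x: "x \<in> carrier G"
  shows "(L #> x \<in> grp_center (G Mod L)) \<longleftrightarrow> (\<forall>s\<in>carrier G. inv s \<otimes> x \<otimes> s \<otimes> inv x \<in> L)"
proof -
  have H: "subgroup L G" using N normal_imp_subgroup by blast
  have "(L #> x \<in> grp_center (G Mod L)) \<longleftrightarrow> (\<forall>s\<in>carrier G. L #> (x \<otimes> s) = L #> (s \<otimes> x))"
    unfolding grp_center_def carrier_FactGroup using x normal.rcos_sum[OF N] by auto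
  also have "\<dots> \<longleftrightarrow> (\<forall>s\<in>carrier G. x \<otimes> s \<otimes> inv x \<otimes> inv s \<in> L)"
  proof -
    have "L #> (x \<otimes> s) = L #> (s \<otimes> x) \<longleftrightarrow> x \<otimes> s \<otimes> inv x \<otimes> inv s \<in> L" if s: "s \<in> carrier G" for s
      using coset_eq_iff[OF H, of "x \<otimes> s" "s \<otimes> x"] x s by (simp add: inv_mult_group m_assoc)
    thus ?thesis by auto
  qed
  also have "\<dots> \<longleftrightarrow> (\<forall>s\<in>carrier G. inv s \<otimes> x \<otimes> s \<otimes> inv x \<in> L)"
  proof -
    have e: "x \<otimes> inv s \<otimes> inv x \<otimes> s = inv (inv s \<otimes> x \<otimes> s \<otimes> inv x)" if s: "s \<in> carrier G" for s
      using x s by (simp add: inv_mult_group m_assoc)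
    have "x \<otimes> inv s \<otimes> inv x \<otimes> s \<in> L \<longleftrightarrow> inv s \<otimes> x \<otimes> s \<otimes> inv x \<in> L" if s: "s \<in> carrier G" for s
      using e[OF s] subgroup_inv_iff[OF H, of "inv s \<otimes> x \<otimes> s \<otimes> inv x"] x s by simp
    moreover have "(\<forall>s\<in>carrier G. x \<otimes> s \<otimes> inv x \<otimes> inv s \<in> L) \<longleftrightarrow> (\<forall>s\<in>carrier G. x \<otimes> inv s \<otimes> inv x \<otimes> s \<in> L)"
    proof
      assume A: "\<forall>s\<in>carrier G. x \<otimes> s \<otimes> inv x \<otimes> inv s \<in> L"
      show "\<forall>s\<in>carrier G. x \<otimes> inv s \<otimes> inv x \<otimes> s \<in> L"
      proof
        fix s assume s: "s \<in> carrier G"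
        show "x \<otimes> inv s \<otimes> inv x \<otimes> s \<in> L" using A[rule_format, of "inv s"] s by simp
      qed
    next
      assume A: "\<forall>s\<in>carrier G. x \<otimes> inv s \<otimes> inv x \<otimes> s \<in> L"
      show "\<forall>s\<in>carrier G. x \<otimes> s \<otimes> inv x \<otimes> inv s \<in> L"
      proof
        fix s assume s: "s \<in> carrier G"
        show "x \<otimes> s \<otimes> inv x \<otimes> inv s \<in> L" using A[rule_format, of "inv s"] s by simp
      qed
    qed
    ultimately show ?thesis by auto
  qed
  finally show ?thesis .
qed

lemma (in group) derived_quot_iff:
  assumes N: "L \<lhd> G" and LD: "L \<subseteq> derived G (carrier G)" and x: "x \<in> carrier G"
  shows "(L #> x \<in> derived (G Mod L) (carrier (G Mod L))) \<longleftrightarrow> x \<in> derived G (carrier G)"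
proof -
  have H: "subgroup L G" using N normal_imp_subgroup by blast
  have gh: "group_hom G (G Mod L) (\<lambda>a. L #> a)"
    by (simp add: group_hom_def group_hom_axioms_def is_group normal.factorgroup_is_group[OF N]
        normal.r_coset_hom_Mod[OF N])
  have Dsub: "subgroup (derived G (carrier G)) G" by (rule derived_is_subgroup) simp
  have "derived (G Mod L) (carrier (G Mod L)) = (\<lambda>a. L #> a) ` derived G (carrier G)"
    unfolding carrier_FactGroup using group_hom.derived_img[OF gh, of "carrier G"] by simp
  moreover have "(L #> x \<in> (\<lambda>a. L #> a) ` derived G (carrier G)) \<longleftrightarrow> x \<in> derived G (carrier G)"
  proof
    assume "L #> x \<in> (\<lambda>a. L #> a) ` derived G (carrier G)"
    then obtain d where d: "d \<in> derived G (carrier G)" "L #> x = L #> d" by auto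
    have dc: "d \<in> carrier G" using d(1) subgroup.subset[OF Dsub] by auto
    have "x \<otimes> inv d \<in> L" using coset_eq_iff[OF H x dc] d(2) by simp
    hence "x \<otimes> inv d \<in> derived G (carrier G)" using LD by auto
    hence "(x \<otimes> inv d) \<otimes> d \<in> derived G (carrier G)" using subgroup.m_closed[OF Dsub] d(1) by blast
    thus "x \<in> derived G (carrier G)" using x dc by (simp add: m_assoc)
  qed auto
  ultimately show ?thesis by simp
qed

lemma (in group) F_normal:
  assumes DN: "D \<lhd> G" and Dab: "\<forall>x\<in>D. \<forall>y\<in>D. x \<otimes> y = y \<otimes> x"
    and N: "L \<lhd> G" and LD: "L \<subseteq> D"
  shows "{x \<in> D. \<forall>s\<in>carrier G. inv s \<otimes> x \<otimes> s \<otimes> inv x \<in> L} \<lhd> G"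
proof -
  have H: "subgroup L G" using N normal_imp_subgroup by blast
  have DS: "subgroup D G" using DN normal_imp_subgroup by blast
  have Dc: "y \<in> D \<Longrightarrow> y \<in> carrier G" for y using subgroup.subset[OF DS] by auto
  have conjD: "s \<in> carrier G \<Longrightarrow> y \<in> D \<Longrightarrow> inv s \<otimes> y \<otimes> s \<in> D" for s y
    using normal_inv_iff[of D] DN by (metis inv_closed inv_inv)
  let ?F = "{x \<in> D. \<forall>s\<in>carrier G. inv s \<otimes> x \<otimes> s \<otimes> inv x \<in> L}"
  have sub: "subgroup ?F G"
  proof (rule subgroupI)
    show "?F \<subseteq> carrier G" using Dc by auto
    have "\<one> \<in> ?F" using subgroup.one_closed[OF DS] subgroup.one_closed[OF H] by auto
    thus "?F \<noteq> {}" by auto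
  next
    fix a assume a: "a \<in> ?F"
    have aD: "a \<in> D" and ac: "a \<in> carrier G" using a Dc by auto
    have "inv a \<in> D" using aD subgroup.m_inv_closed[OF DS] by auto
    moreover have "inv s \<otimes> inv a \<otimes> s \<otimes> inv (inv a) \<in> L" if s: "s \<in> carrier G" for s
    proof -
      define c where "c = inv s \<otimes> a \<otimes> s"
      have cD: "c \<in> D" unfolding c_def using conjD[OF s aD] .
      have cc: "c \<in> carrier G" using Dc cD .
      have "c \<otimes> inv a \<in> L" using a s unfolding c_def by auto
      hence "inv (c \<otimes> inv a) \<in> L" using subgroup.m_inv_closed[OF H] by blast
      hence "a \<otimes> inv c \<in> L" using cc ac by (simp add: inv_mult_group)
      moreover have "a \<otimes> inv c = inv c \<otimes> a"
        using Dab aD subgroup.m_inv_closed[OF DS cD] by blast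
      moreover have "inv s \<otimes> inv a \<otimes> s = inv c"
        unfolding c_def using s ac by (simp add: inv_mult_group m_assoc)
      ultimately show ?thesis using ac by simp
    qed
    ultimately show "inv a \<in> ?F" by auto
  next
    fix a b assume a: "a \<in> ?F" and b: "b \<in> ?F"
    have aD: "a \<in> D" and ac: "a \<in> carrier G" and bD: "b \<in> D" and bc: "b \<in> carrier G"
      using a b Dc by auto
    have "a \<otimes> b \<in> D" using subgroup.m_closed[OF DS aD bD] .
    moreover have "inv s \<otimes> (a \<otimes> b) \<otimes> s \<otimes> inv (a \<otimes> b) \<in> L" if s: "s \<in> carrier G" for s
    proof -
      define c where "c = inv s \<otimes> a \<otimes> s"
      define k where "k = inv s \<otimes> b \<otimes> s \<otimes> inv b"
      have cc: "c \<in> carrier G" unfolding c_def using s ac by auto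
      have kL: "k \<in> L" unfolding k_def using b s by auto
      have kD: "k \<in> D" using kL LD by auto
      have kc: "k \<in> carrier G" using Dc kD .
      have caL: "c \<otimes> inv a \<in> L" using a s unfolding c_def by auto
      have "inv s \<otimes> (a \<otimes> b) \<otimes> s \<otimes> inv (a \<otimes> b) = c \<otimes> k \<otimes> inv a"
        unfolding c_def k_def using s ac bc by (simp add: inv_mult_group m_assoc cancel_l1)
      also have "k \<otimes> inv a = inv a \<otimes> k"
        using Dab kD subgroup.m_inv_closed[OF DS aD] by blast
      hence "c \<otimes> k \<otimes> inv a = (c \<otimes> inv a) \<otimes> k" using cc kc ac by (simp add: m_assoc)
      finally show ?thesis using subgroup.m_closed[OF H caL kL] by simp
    qed
    ultimately show "a \<otimes> b \<in> ?F" by auto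
  qed
  show ?thesis unfolding normal_inv_iff
  proof (intro conjI ballI sub)
    fix t h assume t: "t \<in> carrier G" and h: "h \<in> ?F"
    have hD: "h \<in> D" and hc: "h \<in> carrier G" using h Dc by auto
    have "t \<otimes> h \<otimes> inv t \<in> D" using DN normal_inv_iff[of D] t hD by blast
    moreover have "inv s \<otimes> (t \<otimes> h \<otimes> inv t) \<otimes> s \<otimes> inv (t \<otimes> h \<otimes> inv t) \<in> L" if s: "s \<in> carrier G" for s
    proof -
      define s' where "s' = inv t \<otimes> s \<otimes> t"
      have s'c: "s' \<in> carrier G" unfolding s'_def using s t by auto
      have "inv s' \<otimes> h \<otimes> s' \<otimes> inv h \<in> L" using h s'c by auto
      hence "t \<otimes> (inv s' \<otimes> h \<otimes> s' \<otimes> inv h) \<otimes> inv t \<in> L"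
        using N normal_inv_iff[of L] t by blast
      moreover have "t \<otimes> (inv s' \<otimes> h \<otimes> s' \<otimes> inv h) \<otimes> inv t
          = inv s \<otimes> (t \<otimes> h \<otimes> inv t) \<otimes> s \<otimes> inv (t \<otimes> h \<otimes> inv t)"
        unfolding s'_def using s t hc by (simp add: inv_mult_group m_assoc cancel_l1 cancel_l2)
      ultimately show ?thesis by simp
    qed
    ultimately show "t \<otimes> h \<otimes> inv t \<in> ?F" by auto
  qed
qed


lemma (in group) Lambda_Suc':
  assumes N: "Lambda G k \<lhd> G" and LD: "Lambda G k \<subseteq> derived G (carrier G)"
  shows "Lambda G (Suc k) = {x \<in> derived G (carrier G). \<forall>s\<in>carrier G. inv s \<otimes> x \<otimes> s \<otimes> inv x \<in> Lambda G k}"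
proof -
  have Dc: "derived G (carrier G) \<subseteq> carrier G" by (rule derived_in_carrier) simp
  show ?thesis
    unfolding Lambda.simps(2)
    using center_iff[OF N] derived_quot_iff[OF N LD] Dc by auto
qed

lemma (in group) Lambda_props:
  assumes Dab: "\<forall>x\<in>derived G (carrier G). \<forall>y\<in>derived G (carrier G). x \<otimes> y = y \<otimes> x"
  shows "Lambda G k \<lhd> G \<and> Lambda G k \<subseteq> derived G (carrier G)"
proof (induction k)
  case 0
  have "\<one> \<in> derived G (carrier G)" using derived_is_subgroup[of "carrier G"] subgroup.one_closed by auto
  thus ?case using one_is_normal by simp
next
  case (Suc k)
  have DN: "derived G (carrier G) \<lhd> G" by (rule derived_is_normal[OF normal_self])
  show ?case unfolding Lambda_Suc'[OF Suc[THEN conjunct1] Suc[THEN conjunct2]]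
    using F_normal[OF DN Dab Suc[THEN conjunct1] Suc[THEN conjunct2]] by auto
qed


locale fbasis = fsetup +
  assumes bij: "bij_betw (\<lambda>a. ordprod G g a [1..<Suc n]) ({1..n} \<rightarrow>\<^sub>E {..<p}) D"
begin

abbreviation "phi a \<equiv> ordprod G g a [1..<Suc n]"
abbreviation "EE \<equiv> {1..n} \<rightarrow>\<^sub>E {..<p}"
definition "Z k = {a \<in> EE. \<forall>j\<in>{1..n - k}. a j = 0}"
definition "red a = restrict (\<lambda>k. a k mod p) {1..n}"

lemma p_gt1: "p > 1"
  using pprime prime_gt_1_nat by blast

lemma red_E: "red a \<in> EE"
  unfolding red_def using p_gt1 by auto

lemma phi_red: "phi (red a) = phi a"
proof -
  have "phi a = ordprod G g (\<lambda>i. a i mod p) [1..<Suc n]" by (intro op_mod) auto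
  also have "\<dots> = phi (red a)" unfolding red_def by (intro op_cong) auto
  finally show ?thesis by simp
qed

lemma phi_inj: "a \<in> EE \<Longrightarrow> b \<in> EE \<Longrightarrow> phi a = phi b \<Longrightarrow> a = b"
proof -
  assume h: "a \<in> EE" "b \<in> EE" "phi a = phi b"
  have "inj_on phi EE" by (rule bij_betw_imp_inj_on[OF bij])
  thus ?thesis using h unfolding inj_on_def by blast
qed

lemma phi_D: "phi a \<in> D"
  by (intro op_closed) auto

lemma phi_surj: "x \<in> D \<Longrightarrow> \<exists>a\<in>EE. x = phi a"
proof -
  assume x: "x \<in> D"
  have "phi ` EE = D" by (rule bij_betw_imp_surj_on[OF bij])
  hence "x \<in> phi ` EE" using x by simp
  thus ?thesis by (simp only: image_iff)
qed

lemma D_finite: "finite D"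
proof -
  have "finite EE" by (intro finite_PiE) auto
  thus ?thesis using bij_betw_finite[OF bij] by simp
qed

lemma Z_E: "Z k \<subseteq> EE"
  unfolding Z_def by auto

lemma Z_PiE: "Z k = PiE {1..n} (\<lambda>j. if j \<le> n - k then {0} else {..<p})"
proof (rule Set.set_eqI)
  fix a :: "nat \<Rightarrow> nat"
  have "a \<in> Z k \<longleftrightarrow> (\<forall>i\<in>{1..n}. a i \<in> {..<p}) \<and> a \<in> extensional {1..n} \<and> (\<forall>j\<in>{1..n - k}. a j = 0)"
    unfolding Z_def PiE_iff by blast
  also have "\<dots> \<longleftrightarrow> (\<forall>i\<in>{1..n}. a i \<in> (if i \<le> n - k then {0} else {..<p})) \<and> a \<in> extensional {1..n}"
  proof -
    have "(\<forall>i\<in>{1..n}. a i \<in> {..<p}) \<and> (\<forall>j\<in>{1..n - k}. a j = 0) \<longleftrightarrow>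
          (\<forall>i\<in>{1..n}. a i \<in> (if i \<le> n - k then {0} else {..<p}))"
    proof
      assume h: "(\<forall>i\<in>{1..n}. a i \<in> {..<p}) \<and> (\<forall>j\<in>{1..n - k}. a j = 0)"
      show "\<forall>i\<in>{1..n}. a i \<in> (if i \<le> n - k then {0} else {..<p})"
      proof
        fix i assume i: "i \<in> {1..n}"
        show "a i \<in> (if i \<le> n - k then {0} else {..<p})"
        proof (cases "i \<le> n - k")
          case True
          hence "i \<in> {1..n - k}" using i by simp
          thus ?thesis using h True by simp
        next
          case False thus ?thesis using h i by simp
        qed
      qed
    next
      assume h: "\<forall>i\<in>{1..n}. a i \<in> (if i \<le> n - k then {0} else {..<p})"
      have "a i \<in> {..<p}" if i: "i \<in> {1..n}" for i
      proof (cases "i \<le> n - k")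
        case True thus ?thesis using h i p_gt1 by fastforce
      next
        case False thus ?thesis using h i by fastforce
      qed
      moreover have "a j = 0" if j: "j \<in> {1..n - k}" for j
      proof -
        have "j \<in> {1..n}" "j \<le> n - k" using j by auto
        thus ?thesis using h by fastforce
      qed
      ultimately show "(\<forall>i\<in>{1..n}. a i \<in> {..<p}) \<and> (\<forall>j\<in>{1..n - k}. a j = 0)" by blast
    qed
    thus ?thesis by blast
  qed
  also have "\<dots> \<longleftrightarrow> a \<in> PiE {1..n} (\<lambda>j. if j \<le> n - k then {0} else {..<p})"
    unfolding PiE_iff by blast
  finally show "a \<in> Z k \<longleftrightarrow> a \<in> PiE {1..n} (\<lambda>j. if j \<le> n - k then {0} else {..<p})" .
qed

lemma card_Z: "k \<le> n \<Longrightarrow> card (Z k) = p ^ k"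
proof -
  assume k: "k \<le> n"
  have "card (Z k) = (\<Prod>j\<in>{1..n}. card (if j \<le> n - k then {0} else {..<p}))"
    unfolding Z_PiE by (rule card_PiE) simp
  also have "\<dots> = (\<Prod>j\<in>{1..n}. if j \<le> n - k then 1 else p)"
    by (intro prod.cong) auto
  also have "\<dots> = (\<Prod>j\<in>{1..n} \<inter> - {j. j \<le> n - k}. p)"
    by (simp add: prod.If_cases)
  also have "{1..n} \<inter> - {j. j \<le> n - k} = {n - k + 1..n}" using k by auto
  also have "(\<Prod>j\<in>{n - k + 1..n}. p) = p ^ k" using k by simp
  finally show ?thesis .
qed

lemma card_V: "k \<le> n \<Longrightarrow> card (phi ` Z k) = p ^ k"
proof -
  assume k: "k \<le> n"
  have "inj_on phi (Z k)" by (rule inj_on_subset[OF bij_betw_imp_inj_on[OF bij] Z_E])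
  hence "card (phi ` Z k) = card (Z k)" by (rule card_image)
  thus ?thesis using card_Z[OF k] by simp
qed

lemma red_Z: "(\<And>j. j \<in> {1..n - k} \<Longrightarrow> a j mod p = 0) \<Longrightarrow> red a \<in> Z k"
  unfolding Z_def using red_E by (auto simp: red_def)

lemma V_subgroup: "subgroup (phi ` Z k) G"
proof (rule subgroupI)
  show "phi ` Z k \<subseteq> carrier G" using phi_D DG by auto
  have "restrict (\<lambda>j. 0) {1..n} \<in> Z k" unfolding Z_def using p_gt1 by auto
  thus "phi ` Z k \<noteq> {}" by auto
next
  fix x assume "x \<in> phi ` Z k"
  then obtain a where a: "a \<in> Z k" "x = phi a" by auto
  have aE: "a \<in> EE" using a Z_E by auto
  have "ordprod G g (\<lambda>i. p - a i) [1..<Suc n] \<otimes> phi a = ordprod G g (\<lambda>i. p - a i + a i) [1..<Suc n]"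
    by (intro op_mult) auto
  also have "\<dots> = ordprod G g (\<lambda>i. p) [1..<Suc n]"
  proof (intro op_cong)
    fix i assume "i \<in> set [1..<Suc n]"
    hence "a i < p" using aE by auto
    thus "p - a i + a i = p" by simp
  qed
  also have "\<dots> = ordprod G g (\<lambda>i. p mod p) [1..<Suc n]" by (intro op_mod) auto
  also have "\<dots> = \<one>" by (intro op_zero) auto
  finally have "inv (phi a) = ordprod G g (\<lambda>i. p - a i) [1..<Suc n]"
    using phi_D DG by (intro inv_equality) auto
  also have "\<dots> = phi (red (\<lambda>i. p - a i))" by (rule phi_red[symmetric])
  finally have "inv x = phi (red (\<lambda>i. p - a i))" using a by simp
  moreover have "red (\<lambda>i. p - a i) \<in> Z k" using a(1) by (intro red_Z) (auto simp: Z_def)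
  ultimately show "inv x \<in> phi ` Z k" by auto
next
  fix x y assume "x \<in> phi ` Z k" "y \<in> phi ` Z k"
  then obtain a b where a: "a \<in> Z k" "x = phi a" and b: "b \<in> Z k" "y = phi b" by auto
  have "x \<otimes> y = ordprod G g (\<lambda>i. a i + b i) [1..<Suc n]" unfolding a(2) b(2) by (intro op_mult) auto
  also have "\<dots> = phi (red (\<lambda>i. a i + b i))" by (rule phi_red[symmetric])
  finally show "x \<otimes> y \<in> phi ` Z k"
    using a(1) b(1) red_Z[of k "\<lambda>i. a i + b i"] by (auto simp: Z_def)
qed

lemma gen_delta: "j \<in> {1..n} \<Longrightarrow> g j = phi (restrict (\<lambda>i. if i = j then 1 else 0) {1..n})"
proof -
  assume j: "j \<in> {1..n}"
  have h: "set [1..<Suc n] \<subseteq> {1..n}" "distinct [1..<Suc n]" "j \<in> set [1..<Suc n]" using j by auto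
  have "g j = ordprod G g (\<lambda>i. if i = j then 1 else 0) [1..<Suc n]"
    using op_delta[OF h(1,2), of j] h(3) by simp
  also have "\<dots> = phi (restrict (\<lambda>i. if i = j then 1 else 0) {1..n})" by (intro op_cong) auto
  finally show ?thesis .
qed

lemma delta_E: "restrict (\<lambda>i. if i = j then 1 else 0) {1..n} \<in> EE"
  using p_gt1 by auto

lemma subgroup_pow: "subgroup H G \<Longrightarrow> x \<in> H \<Longrightarrow> x [^] (m::nat) \<in> H"
  by (induction m) (auto intro: subgroup.m_closed subgroup.one_closed)

lemma V_gen: "k \<le> n \<Longrightarrow> phi ` Z k = generate G (g ` {n - k + 1..n})"
proof
  assume k: "k \<le> n"
  have gc: "g ` {n - k + 1..n} \<subseteq> carrier G" using gD DG by auto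
  have GS: "subgroup (generate G (g ` {n - k + 1..n})) G" by (rule generate_is_subgroup[OF gc])
  have "ordprod G g a xs \<in> generate G (g ` {n - k + 1..n})"
    if "set xs \<subseteq> {1..n}" "\<forall>j\<in>set xs. j \<le> n - k \<longrightarrow> a j = 0" for a xs
    using that
  proof (induction xs)
    case Nil thus ?case using subgroup.one_closed[OF GS] by (simp add: op_Nil)
  next
    case (Cons x xs)
    have "g x [^] a x \<in> generate G (g ` {n - k + 1..n})"
    proof (cases "x \<le> n - k")
      case True thus ?thesis using Cons subgroup.one_closed[OF GS] by simp
    next
      case False
      hence "g x \<in> generate G (g ` {n - k + 1..n})" using Cons(2) by (intro generate.incl) auto
      thus ?thesis using subgroup_pow[OF GS] by blast
    qed
    thus ?case using Cons subgroup.m_closed[OF GS] by (simp add: op_Cons)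
  qed
  note main = this
  show "phi ` Z k \<subseteq> generate G (g ` {n - k + 1..n})"
  proof
    fix x assume "x \<in> phi ` Z k"
    then obtain a where a: "a \<in> Z k" "x = phi a" by auto
    have "\<forall>j\<in>set [1..<Suc n]. j \<le> n - k \<longrightarrow> a j = 0" using a(1) unfolding Z_def by auto
    thus "x \<in> generate G (g ` {n - k + 1..n})" using main[of "[1..<Suc n]" a] a(2) by (simp add: atLeastLessThanSuc_atLeastAtMost)
  qed
next
  assume k: "k \<le> n"
  have "g ` {n - k + 1..n} \<subseteq> phi ` Z k"
  proof
    fix x assume "x \<in> g ` {n - k + 1..n}"
    then obtain j where j: "j \<in> {n - k + 1..n}" "x = g j" by auto
    have "restrict (\<lambda>i. if i = j then 1 else 0) {1..n} \<in> Z k"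
      using delta_E j unfolding Z_def by auto
    moreover have "x = phi (restrict (\<lambda>i. if i = j then 1 else 0) {1..n})"
      using gen_delta j by auto
    ultimately show "x \<in> phi ` Z k" by auto
  qed
  thus "generate G (g ` {n - k + 1..n}) \<subseteq> phi ` Z k"
    by (rule generate_subgroup_incl[OF _ V_subgroup])
qed

end


locale flam = fbasis +
  fixes l :: "nat \<Rightarrow> nat \<Rightarrow> 'a set \<Rightarrow> nat" and Lam :: "nat \<Rightarrow> 'a set"
  assumes unitri': "\<forall>s\<in>carrier G. \<forall>j\<in>{1..n}. inv s \<otimes> g j \<otimes> s = g j \<otimes> ordprod G g (\<lambda>i. l i j (D #> s)) [Suc j..<Suc n]"
  and l_range: "\<forall>i j y. l i j y < p"
  and Lam0: "Lam 0 = {\<one>}"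
  and LamS: "\<And>k. Lam (Suc k) = {x \<in> D. \<forall>s\<in>carrier G. inv s \<otimes> x \<otimes> s \<otimes> inv x \<in> Lam k}"
begin

definition "Mred s a = red (\<lambda>k. \<Sum>i\<in>{1..n}. if i < k then a i * l k i (D #> s) else 0)"

lemma kappa_phi: "s \<in> carrier G \<Longrightarrow> inv s \<otimes> phi a \<otimes> s \<otimes> inv (phi a) = phi (Mred s a)"
proof -
  assume s: "s \<in> carrier G"
  have hyp: "\<forall>j\<in>{1..n}. inv s \<otimes> g j \<otimes> s = g j \<otimes> ordprod G g (\<lambda>i. l i j (D #> s)) [Suc j..<Suc n]"
    using unitri' s by blast
  define N where "N = (\<lambda>k. \<Sum>i\<in>{1..n}. if i < k then a i * l k i (D #> s) else 0)"
  have m: "ordprod G g N [1..<Suc n] = ordprod G g (\<lambda>k. N k mod p) [1..<Suc n]"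
    by (intro op_mod) auto
  show ?thesis unfolding Mred_def phi_red
    using kappa_op[OF s hyp, of a] m unfolding N_def by simp
qed

lemma Mred_E: "Mred s a \<in> EE"
  unfolding Mred_def by (rule red_E)

lemma Lam_mono: "Lam k \<subseteq> Lam (Suc k)"
proof (induction k)
  case 0
  have "\<one> \<in> Lam (Suc 0)" unfolding LamS[of 0] Lam0 using Done by simp
  thus ?case using Lam0 by simp
next
  case (Suc k)
  show ?case
  proof
    fix x assume "x \<in> Lam (Suc k)"
    hence x: "x \<in> D" "\<forall>s\<in>carrier G. inv s \<otimes> x \<otimes> s \<otimes> inv x \<in> Lam k"
      using LamS[of k] by auto
    have "\<forall>s\<in>carrier G. inv s \<otimes> x \<otimes> s \<otimes> inv x \<in> Lam (Suc k)"
      using x(2) Suc.IH by (meson subsetD)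
    thus "x \<in> Lam (Suc (Suc k))" using x(1) LamS[of "Suc k"] by simp
  qed
qed

lemma phi_zero: "(\<And>j. j \<in> {1..n} \<Longrightarrow> a j = 0) \<Longrightarrow> phi a = \<one>"
  by (intro op_zero) auto

lemma K1: "k \<le> n \<Longrightarrow> phi ` Z k \<subseteq> Lam k"
proof (induction k)
  case 0
  have "phi a = \<one>" if "a \<in> Z 0" for a using that unfolding Z_def by (intro phi_zero) auto
  thus ?case using Lam0 by auto
next
  case (Suc k)
  hence IH: "phi ` Z k \<subseteq> Lam k" by auto
  show ?case
  proof
    fix x assume "x \<in> phi ` Z (Suc k)"
    then obtain a where a: "a \<in> Z (Suc k)" "x = phi a" by auto
    have "inv s \<otimes> x \<otimes> s \<otimes> inv x \<in> Lam k" if s: "s \<in> carrier G" for s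
    proof -
      have "Mred s a \<in> Z k" unfolding Mred_def
      proof (rule red_Z)
        fix j assume j: "j \<in> {1..n - k}"
        have "(\<Sum>i\<in>{1..n}. if i < j then a i * l j i (D #> s) else 0) = 0"
        proof (intro sum.neutral ballI)
          fix i assume i: "i \<in> {1..n}"
          show "(if i < j then a i * l j i (D #> s) else 0) = 0"
          proof (cases "i < j")
            case True
            hence "i \<in> {1..n - Suc k}" using i j by auto
            thus ?thesis using a(1) True unfolding Z_def by auto
          qed simp
        qed
        thus "(\<Sum>i\<in>{1..n}. if i < j then a i * l j i (D #> s) else 0) mod p = 0" by simp
      qed
      thus ?thesis using kappa_phi[OF s, of a] a(2) IH by auto
    qed
    thus "x \<in> Lam (Suc k)" unfolding LamS using a(2) phi_D by auto
  qed
qed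

lemma sum_single: "j \<in> {1..n} \<Longrightarrow> (\<And>i. i \<in> {1..n} \<Longrightarrow> i \<noteq> j \<Longrightarrow> f i = (0::nat)) \<Longrightarrow>
   (\<Sum>i\<in>{1..n}. f i) = f j"
proof -
  assume j: "j \<in> {1..n}" and z: "\<And>i. i \<in> {1..n} \<Longrightarrow> i \<noteq> j \<Longrightarrow> f i = 0"
  have "(\<Sum>i\<in>{1..n}. f i) = (\<Sum>i\<in>{1..n}. if i = j then f j else 0)"
    using z by (intro sum.cong) auto
  also have "\<dots> = f j" using j by simp
  finally show ?thesis .
qed

lemma K2:
  assumes H3: "\<forall>j\<in>{1..n - 1}. \<exists>y\<in>carrier (G Mod D). l (Suc j) j y \<noteq> 0"
  shows "k \<le> n \<Longrightarrow> Lam k \<subseteq> phi ` Z k"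
proof (induction k)
  case 0
  have "restrict (\<lambda>j. 0) {1..n} \<in> Z 0" unfolding Z_def using p_gt1 by auto
  moreover have "phi (restrict (\<lambda>j. 0) {1..n}) = \<one>" by (intro phi_zero) auto
  ultimately show ?case using Lam0 by force
next
  case (Suc k)
  hence IH: "Lam k \<subseteq> phi ` Z k" and kn: "Suc k \<le> n" by auto
  show ?case
  proof
    fix x assume x: "x \<in> Lam (Suc k)"
    hence xD: "x \<in> D" and xk: "\<forall>s\<in>carrier G. inv s \<otimes> x \<otimes> s \<otimes> inv x \<in> Lam k"
      unfolding LamS by auto
    obtain a where aE: "a \<in> EE" and xa: "x = phi a" using phi_surj[OF xD] by auto
    have "a \<in> Z (Suc k)"
    proof (rule ccontr)
      assume "a \<notin> Z (Suc k)"
      hence ex: "\<exists>j. j \<in> {1..n - Suc k} \<and> a j \<noteq> 0" using aE unfolding Z_def by auto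
      define j where "j = (LEAST j. j \<in> {1..n - Suc k} \<and> a j \<noteq> 0)"
      have jP: "j \<in> {1..n - Suc k} \<and> a j \<noteq> 0" unfolding j_def by (rule LeastI_ex[OF ex])
      have jmin: "\<And>i. i < j \<Longrightarrow> \<not> (i \<in> {1..n - Suc k} \<and> a i \<noteq> 0)"
        unfolding j_def by (rule not_less_Least)
      have "j \<in> {1..n - 1}" using jP kn by auto
      then obtain y where y: "y \<in> carrier (G Mod D)" and ly: "l (Suc j) j y \<noteq> 0" using H3 by blast
      obtain s where s: "s \<in> carrier G" and ys: "y = D #> s"
        using y unfolding carrier_FactGroup by auto
      have "inv s \<otimes> x \<otimes> s \<otimes> inv x \<in> Lam k" using xk s by blast
      hence "phi (Mred s a) \<in> Lam k" using kappa_phi[OF s, of a] xa by simp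
      hence "phi (Mred s a) \<in> phi ` Z k" using IH by (rule subsetD[rotated])
      then obtain b where b: "b \<in> Z k" "phi (Mred s a) = phi b" by auto
      have "Mred s a = b" using phi_inj[OF Mred_E _ b(2)] b(1) Z_E by auto
      hence "Mred s a (Suc j) = 0" using b(1) jP unfolding Z_def by auto
      moreover have "Suc j \<in> {1..n}" using jP kn by auto
      ultimately have "(\<Sum>i\<in>{1..n}. if i < Suc j then a i * l (Suc j) i y else 0) mod p = 0"
        unfolding Mred_def red_def ys by simp
      moreover have "(\<Sum>i\<in>{1..n}. if i < Suc j then a i * l (Suc j) i y else 0) = a j * l (Suc j) j y"
      proof -
        have "j \<in> {1..n}" using jP kn by auto
        moreover have "(if i < Suc j then a i * l (Suc j) i y else 0) = 0" if "i \<in> {1..n}" "i \<noteq> j" for i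
        proof (cases "i < j")
          case True
          hence "a i = 0" using jmin[OF True] that jP by auto
          thus ?thesis by simp
        next
          case False thus ?thesis using that by auto
        qed
        ultimately show ?thesis
          using sum_single[of j "\<lambda>i. if i < Suc j then a i * l (Suc j) i y else 0"] by simp
      qed
      ultimately have "p dvd a j * l (Suc j) j y" by auto
      hence "p dvd a j \<or> p dvd l (Suc j) j y" using pprime prime_dvd_mult_iff by blast
      moreover have "a j < p" using aE jP by auto
      moreover have "l (Suc j) j y < p" using l_range by blast
      ultimately show False using jP ly by (auto dest: dvd_imp_le)
    qed
    thus "x \<in> phi ` Z (Suc k)" using xa by auto
  qed
qed

lemma K3:
  assumes j: "j \<in> {1..n - 1}" and z: "\<forall>y\<in>carrier (G Mod D). l (Suc j) j y = 0"
  shows "g j \<in> Lam (n - j)" "g j \<notin> phi ` Z (n - j)"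
proof -
  define e where "e = restrict (\<lambda>i. if i = j then 1 else (0::nat)) {1..n}"
  have eE: "e \<in> EE" unfolding e_def by (rule delta_E)
  have jn: "j \<in> {1..n}" using j by auto
  have ge: "g j = phi e" unfolding e_def using gen_delta[OF jn] .
  show "g j \<notin> phi ` Z (n - j)"
  proof
    assume "g j \<in> phi ` Z (n - j)"
    then obtain b where b: "b \<in> Z (n - j)" "g j = phi b" by auto
    have "e = b" using phi_inj[OF eE _ ] b ge Z_E by auto
    moreover have "e j = 1" unfolding e_def using jn by simp
    moreover have "j \<in> {1..n - (n - j)}" using jn by auto
    ultimately show False using b(1) unfolding Z_def by auto
  qed
  define m where "m = n - j - 1"
  have nm: "n - j = Suc m" unfolding m_def using j by auto
  have "inv s \<otimes> g j \<otimes> s \<otimes> inv (g j) \<in> Lam m" if s: "s \<in> carrier G" for s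
  proof -
    have ys: "D #> s \<in> carrier (G Mod D)" unfolding carrier_FactGroup using s by auto
    have "Mred s e \<in> Z m" unfolding Mred_def
    proof (rule red_Z)
      fix i assume i: "i \<in> {1..n - m}"
      have "(\<Sum>i'\<in>{1..n}. if i' < i then e i' * l i i' (D #> s) else 0) = 0"
      proof (intro sum.neutral ballI)
        fix i' assume i': "i' \<in> {1..n}"
        show "(if i' < i then e i' * l i i' (D #> s) else 0) = 0"
        proof (cases "i' = j \<and> i' < i")
          case True
          hence "i = Suc j" using i nm by auto
          hence "l i i' (D #> s) = 0" using z ys True by auto
          thus ?thesis by simp
        next
          case False
          hence "i' < i \<Longrightarrow> e i' = 0" unfolding e_def using i' by auto
          thus ?thesis by auto
        qed
      qed
      thus "(\<Sum>i'\<in>{1..n}. if i' < i then e i' * l i i' (D #> s) else 0) mod p = 0" by simp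
    qed
    hence "phi (Mred s e) \<in> Lam m" using K1[of m] unfolding m_def by auto
    thus ?thesis using kappa_phi[OF s, of e] ge by simp
  qed
  moreover have "g j \<in> D" using gD jn by auto
  ultimately show "g j \<in> Lam (n - j)" unfolding nm LamS by auto
qed

end


lemma prime_order_iso:
  assumes Q: "group Q" and c: "card (carrier Q) = p" and pp: "Factorial_Ring.prime p"
  shows "Q \<cong> integer_mod_group p"
proof -
  interpret Q: group Q by (rule Q)
  have p1: "p > 1" using pp prime_gt_1_nat by blast
  have fin: "finite (carrier Q)" using c p1 card.infinite by fastforce
  have "carrier Q \<noteq> {\<one>\<^bsub>Q\<^esub>}" using c p1 by auto
  then obtain x where x: "x \<in> carrier Q" "x \<noteq> \<one>\<^bsub>Q\<^esub>" using Q.one_closed by blast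
  have "Q.ord x dvd p" using Q.ord_dvd_group_order[OF x(1)] c unfolding order_def by simp
  moreover have "Q.ord x \<noteq> 1" using Q.ord_eq_1 x by simp
  ultimately have ox: "Q.ord x = p" using pp prime_nat_iff by blast
  have xp: "x [^]\<^bsub>Q\<^esub> p = \<one>\<^bsub>Q\<^esub>" using Q.pow_ord_eq_1[OF x(1)] ox by simp
  have powmod: "x [^]\<^bsub>Q\<^esub> (m::nat) = x [^]\<^bsub>Q\<^esub> (m mod p)" for m
  proof -
    have e: "m = m mod p + p * (m div p)" by simp
    have "x [^]\<^bsub>Q\<^esub> m = x [^]\<^bsub>Q\<^esub> (m mod p + p * (m div p))" using e by metis
    also have "\<dots> = x [^]\<^bsub>Q\<^esub> (m mod p) \<otimes>\<^bsub>Q\<^esub> (x [^]\<^bsub>Q\<^esub> p) [^]\<^bsub>Q\<^esub> (m div p)"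
      using Q.nat_pow_mult[OF x(1), of "m mod p" "p * (m div p)"] Q.nat_pow_pow[OF x(1), of p "m div p"] by metis
    also have "\<dots> = x [^]\<^bsub>Q\<^esub> (m mod p)" using xp x(1) by simp
    finally show ?thesis .
  qed
  define h where "h = (\<lambda>k::int. x [^]\<^bsub>Q\<^esub> (nat k))"
  have carrZ: "carrier (integer_mod_group p) = {0..<int p}" using p1 by (simp add: carrier_integer_mod_group)
  have hom: "h \<in> hom (integer_mod_group p) Q"
    unfolding hom_def
  proof (intro CollectI conjI ballI)
    show "h \<in> carrier (integer_mod_group p) \<rightarrow> carrier Q" unfolding h_def using x(1) by auto
  next
    fix a b assume a: "a \<in> carrier (integer_mod_group p)" and b: "b \<in> carrier (integer_mod_group p)"
    have a0: "a \<ge> 0" and b0: "b \<ge> 0" using a b carrZ by auto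
    have "nat ((a + b) mod int p) = (nat a + nat b) mod p"
      using a0 b0 by (simp add: nat_mod_distrib nat_add_distrib)
    hence "h ((a + b) mod int p) = x [^]\<^bsub>Q\<^esub> (nat a + nat b)"
      unfolding h_def using powmod by metis
    also have "\<dots> = h a \<otimes>\<^bsub>Q\<^esub> h b" unfolding h_def using Q.nat_pow_mult[OF x(1)] by simp
    finally show "h (a \<otimes>\<^bsub>integer_mod_group p\<^esub> b) = h a \<otimes>\<^bsub>Q\<^esub> h b" by simp
  qed
  have inj_aux: "a = b" if a: "a \<in> {0..<int p}" and b: "b \<in> {0..<int p}" and e: "h a = h b" and le: "nat a \<le> nat b" for a b
  proof -
    define d where "d = nat b - nat a"
    have "x [^]\<^bsub>Q\<^esub> (nat a) \<otimes>\<^bsub>Q\<^esub> x [^]\<^bsub>Q\<^esub> d = x [^]\<^bsub>Q\<^esub> (nat b)"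
      using Q.nat_pow_mult[OF x(1)] le unfolding d_def by simp
    also have "\<dots> = x [^]\<^bsub>Q\<^esub> (nat a) \<otimes>\<^bsub>Q\<^esub> \<one>\<^bsub>Q\<^esub>" using e x(1) unfolding h_def by simp
    finally have "x [^]\<^bsub>Q\<^esub> d = \<one>\<^bsub>Q\<^esub>" using Q.l_cancel x(1) by (meson Q.nat_pow_closed Q.one_closed)
    hence "p dvd d" using Q.pow_eq_id[OF x(1)] ox by simp
    moreover have "d < p" using a b unfolding d_def by auto
    ultimately have "d = 0" using dvd_imp_le by fastforce
    thus ?thesis using le a b unfolding d_def by auto
  qed
  have inj: "inj_on h {0..<int p}"
  proof (rule inj_onI)
    fix a b assume a: "a \<in> {0..<int p}" and b: "b \<in> {0..<int p}" and e: "h a = h b"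
    show "a = b"
    proof (cases "nat a \<le> nat b")
      case True thus ?thesis using inj_aux a b e by blast
    next
      case False thus ?thesis using inj_aux[OF b a e[symmetric]] by simp
    qed
  qed
  have sub: "h ` {0..<int p} \<subseteq> carrier Q" unfolding h_def using x(1) by auto
  have "card (h ` {0..<int p}) = p" using card_image[OF inj] by simp
  hence "h ` {0..<int p} = carrier Q" using card_subset_eq[OF fin sub] c by simp
  hence "bij_betw h {0..<int p} (carrier Q)" using inj unfolding bij_betw_def by simp
  hence "h \<in> iso (integer_mod_group p) Q" using hom carrZ unfolding iso_def by simp
  hence "integer_mod_group p \<cong> Q" by (rule is_isoI)
  thus ?thesis by (rule group.iso_sym[OF group_integer_mod_group])
qed

theorem proposition5p2:
  fixes G :: "('a, 'b) monoid_scheme" and p n :: nat and g :: "nat \<Rightarrow> 'a"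
    and l :: "nat \<Rightarrow> nat \<Rightarrow> 'a set \<Rightarrow> nat"
  assumes grp: "group G"
    and fin: "finite (carrier G)"
    and p_prime: "Factorial_Ring.prime p"
    and pgroup: "\<exists>k. card (carrier G) = p ^ k"
    and D_frattini: "derived G (carrier G) = frattini G"
    and D_abelian: "\<forall>x \<in> derived G (carrier G). \<forall>y \<in> derived G (carrier G). x \<otimes>\<^bsub>G\<^esub> y = y \<otimes>\<^bsub>G\<^esub> x"
    and D_exp: "\<forall>x \<in> derived G (carrier G). x [^]\<^bsub>G\<^esub> p = \<one>\<^bsub>G\<^esub>"
    and D_card: "card (derived G (carrier G)) = p ^ n"
    and n_pos: "n \<ge> 1"
    and basis: "fp_basis G p (derived G (carrier G)) n g"
    and l_range: "\<forall>i j y. l i j y < p"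
    and unitri: "\<forall>y \<in> carrier (G Mod derived G (carrier G)). \<forall>s \<in> y. \<forall>j \<in> {1..n}.
        inv\<^bsub>G\<^esub> s \<otimes>\<^bsub>G\<^esub> g j \<otimes>\<^bsub>G\<^esub> s
          = g j \<otimes>\<^bsub>G\<^esub> ordprod G g (\<lambda>i. l i j y) [Suc j..<Suc n]"
  shows "((\<forall>i \<in> {1..n}. (G\<lparr>carrier := Lambda G i\<rparr> Mod Lambda G (i - 1)) \<cong> integer_mod_group p)
            \<longleftrightarrow> (\<forall>i \<in> {1..n}. Lambda G i = generate G (g ` {n - i + 1..n})))
       \<and> ((\<forall>i \<in> {1..n}. Lambda G i = generate G (g ` {n - i + 1..n}))
            \<longleftrightarrow> (n = 1 \<or> (n \<ge> 2 \<and> (\<forall>i \<in> {1..n - 1}.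
                   \<exists>y \<in> carrier (G Mod derived G (carrier G)). l (Suc i) i y \<noteq> 0))))"
proof -
  interpret G: group G by (rule grp)
  have DN: "derived G (carrier G) \<lhd> G" by (rule G.derived_is_normal[OF G.normal_self])
  have DS: "subgroup (derived G (carrier G)) G" using DN normal_imp_subgroup by blast
  have LP: "\<And>k. Lambda G k \<lhd> G \<and> Lambda G k \<subseteq> derived G (carrier G)"
    using G.Lambda_props D_abelian by blast
  have unitri': "\<forall>s\<in>carrier G. \<forall>j\<in>{1..n}. inv\<^bsub>G\<^esub> s \<otimes>\<^bsub>G\<^esub> g j \<otimes>\<^bsub>G\<^esub> s
     = g j \<otimes>\<^bsub>G\<^esub> ordprod G g (\<lambda>i. l i j (derived G (carrier G) #>\<^bsub>G\<^esub> s)) [Suc j..<Suc n]"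
  proof (intro ballI)
    fix s j assume s: "s \<in> carrier G" and j: "j \<in> {1..n}"
    have "derived G (carrier G) #>\<^bsub>G\<^esub> s \<in> carrier (G Mod derived G (carrier G))"
      unfolding carrier_FactGroup using s by auto
    moreover have "s \<in> derived G (carrier G) #>\<^bsub>G\<^esub> s" using G.rcos_self[OF s DS] .
    ultimately show "inv\<^bsub>G\<^esub> s \<otimes>\<^bsub>G\<^esub> g j \<otimes>\<^bsub>G\<^esub> s
     = g j \<otimes>\<^bsub>G\<^esub> ordprod G g (\<lambda>i. l i j (derived G (carrier G) #>\<^bsub>G\<^esub> s)) [Suc j..<Suc n]"
      using unitri j by blast
  qed
  interpret F: flam G p n g "derived G (carrier G)" l "Lambda G"
  proof (intro flam.intro fbasis.intro fsetup.intro flam_axioms.intro fbasis_axioms.intro fsetup_axioms.intro)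
    show "group G" by (rule grp)
    show "subgroup (derived G (carrier G)) G" by (rule DS)
    show "\<forall>x\<in>derived G (carrier G). \<forall>y\<in>derived G (carrier G). x \<otimes>\<^bsub>G\<^esub> y = y \<otimes>\<^bsub>G\<^esub> x" by (rule D_abelian)
    show "\<forall>x\<in>derived G (carrier G). x [^]\<^bsub>G\<^esub> p = \<one>\<^bsub>G\<^esub>" by (rule D_exp)
    show "\<forall>i\<in>{1..n}. g i \<in> derived G (carrier G)" using basis unfolding fp_basis_def by blast
    show "Factorial_Ring.prime p" by (rule p_prime)
    show "bij_betw (\<lambda>a. ordprod G g a [1..<Suc n]) ({1..n} \<rightarrow>\<^sub>E {..<p}) (derived G (carrier G))"
      using basis unfolding fp_basis_def by blast
    show "\<forall>s\<in>carrier G. \<forall>j\<in>{1..n}. inv\<^bsub>G\<^esub> s \<otimes>\<^bsub>G\<^esub> g j \<otimes>\<^bsub>G\<^esub> s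
     = g j \<otimes>\<^bsub>G\<^esub> ordprod G g (\<lambda>i. l i j (derived G (carrier G) #>\<^bsub>G\<^esub> s)) [Suc j..<Suc n]"
      by (rule unitri')
    show "\<forall>i j y. l i j y < p" by (rule l_range)
    show "Lambda G 0 = {\<one>\<^bsub>G\<^esub>}" by simp
    fix k
    show "Lambda G (Suc k) = {x \<in> derived G (carrier G). \<forall>s\<in>carrier G.
       inv\<^bsub>G\<^esub> s \<otimes>\<^bsub>G\<^esub> x \<otimes>\<^bsub>G\<^esub> s \<otimes>\<^bsub>G\<^esub> inv\<^bsub>G\<^esub> x \<in> Lambda G k}"
      using G.Lambda_Suc' LP by blast
  qed
  have P2_iff: "(\<forall>i \<in> {1..n}. Lambda G i = generate G (g ` {n - i + 1..n}))
      \<longleftrightarrow> (\<forall>i \<in> {1..n}. Lambda G i = F.phi ` F.Z i)"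
    using F.V_gen by auto
  have Lfin: "finite (Lambda G k)" for k
    using LP F.D_finite finite_subset by blast
  have c0: "card (Lambda G 0) = 1" by simp
  have I23: "(\<forall>i \<in> {1..n}. Lambda G i = F.phi ` F.Z i) \<longleftrightarrow>
     (n = 1 \<or> (n \<ge> 2 \<and> (\<forall>i \<in> {1..n - 1}. \<exists>y \<in> carrier (G Mod derived G (carrier G)). l (Suc i) i y \<noteq> 0)))"
  proof
    assume P2: "\<forall>i \<in> {1..n}. Lambda G i = F.phi ` F.Z i"
    show "n = 1 \<or> (n \<ge> 2 \<and> (\<forall>i \<in> {1..n - 1}. \<exists>y \<in> carrier (G Mod derived G (carrier G)). l (Suc i) i y \<noteq> 0))"
    proof (cases "n = 1")
      case False
      hence n2: "n \<ge> 2" using n_pos by auto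
      have "\<exists>y \<in> carrier (G Mod derived G (carrier G)). l (Suc j) j y \<noteq> 0" if j: "j \<in> {1..n - 1}" for j
      proof (rule ccontr)
        assume "\<not> (\<exists>y \<in> carrier (G Mod derived G (carrier G)). l (Suc j) j y \<noteq> 0)"
        hence z: "\<forall>y\<in>carrier (G Mod derived G (carrier G)). l (Suc j) j y = 0" by blast
        have "n - j \<in> {1..n}" using j by auto
        hence "Lambda G (n - j) = F.phi ` F.Z (n - j)" using P2 by blast
        thus False using F.K3[OF j z] by simp
      qed
      thus ?thesis using n2 by blast
    qed simp
  next
    assume P3: "n = 1 \<or> (n \<ge> 2 \<and> (\<forall>i \<in> {1..n - 1}. \<exists>y \<in> carrier (G Mod derived G (carrier G)). l (Suc i) i y \<noteq> 0))"
    have H3: "\<forall>j\<in>{1..n - 1}. \<exists>y\<in>carrier (G Mod derived G (carrier G)). l (Suc j) j y \<noteq> 0"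
      using P3 by auto
    show "\<forall>i \<in> {1..n}. Lambda G i = F.phi ` F.Z i"
    proof
      fix i assume "i \<in> {1..n}"
      hence i: "i \<le> n" by simp
      show "Lambda G i = F.phi ` F.Z i" using F.K1[OF i] F.K2[OF H3 i] by (rule equalityI[rotated])
    qed
  qed
  have quot: "group (G\<lparr>carrier := Lambda G i\<rparr> Mod Lambda G (i - 1)) \<and>
      card (carrier (G\<lparr>carrier := Lambda G i\<rparr> Mod Lambda G (i - 1))) * card (Lambda G (i - 1)) = card (Lambda G i)"
    if i: "i \<in> {1..n}" for i
  proof -
    have si: "Suc (i - 1) = i" using i by auto
    have Si: "subgroup (Lambda G i) G" using LP normal_imp_subgroup by blast
    have Sh: "subgroup (Lambda G (i - 1)) G" using LP normal_imp_subgroup by blast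
    have sub: "Lambda G (i - 1) \<subseteq> Lambda G i" using F.Lam_mono[of "i - 1"] si by simp
    have grK: "group (G\<lparr>carrier := Lambda G i\<rparr>)" by (rule G.subgroup_imp_group[OF Si])
    have nK: "Lambda G (i - 1) \<lhd> G\<lparr>carrier := Lambda G i\<rparr>"
      by (rule G.normal_restrict_supergroup[OF Si _ sub]) (use LP in blast)
    have sK: "subgroup (Lambda G (i - 1)) (G\<lparr>carrier := Lambda G i\<rparr>)"
      by (rule G.subgroup_incl[OF Sh Si sub])
    have "card (rcosets\<^bsub>G\<lparr>carrier := Lambda G i\<rparr>\<^esub> Lambda G (i - 1)) * card (Lambda G (i - 1))
        = order (G\<lparr>carrier := Lambda G i\<rparr>)"
      by (rule group.lagrange[OF grK sK])
    thus ?thesis using normal.factorgroup_is_group[OF nK]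
      by (simp add: FactGroup_def order_def)
  qed
  have I12: "(\<forall>i \<in> {1..n}. (G\<lparr>carrier := Lambda G i\<rparr> Mod Lambda G (i - 1)) \<cong> integer_mod_group p)
     \<longleftrightarrow> (\<forall>i \<in> {1..n}. Lambda G i = F.phi ` F.Z i)"
  proof
    assume P1: "\<forall>i \<in> {1..n}. (G\<lparr>carrier := Lambda G i\<rparr> Mod Lambda G (i - 1)) \<cong> integer_mod_group p"
    have cardp: "card (carrier (G\<lparr>carrier := Lambda G i\<rparr> Mod Lambda G (i - 1))) = p" if i: "i \<in> {1..n}" for i
    proof -
      have "card (carrier (G\<lparr>carrier := Lambda G i\<rparr> Mod Lambda G (i - 1))) = card (carrier (integer_mod_group p))"
        using P1 i iso_same_card by blast
      also have "\<dots> = p" using F.p_gt1 by (simp add: carrier_integer_mod_group)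
      finally show ?thesis .
    qed
    have ck: "k \<le> n \<Longrightarrow> card (Lambda G k) = p ^ k" for k
    proof (induction k)
      case 0 thus ?case by simp
    next
      case (Suc k)
      hence i: "Suc k \<in> {1..n}" by auto
      have "card (Lambda G (Suc k)) = p * card (Lambda G k)"
        using quot[OF i] cardp[OF i] by simp
      thus ?case using Suc by simp
    qed
    show "\<forall>i \<in> {1..n}. Lambda G i = F.phi ` F.Z i"
    proof
      fix i assume i: "i \<in> {1..n}"
      have "F.phi ` F.Z i \<subseteq> Lambda G i" using F.K1 i by auto
      moreover have "card (F.phi ` F.Z i) = card (Lambda G i)" using F.card_V ck i by auto
      ultimately show "Lambda G i = F.phi ` F.Z i" using card_subset_eq[OF Lfin] by metis
    qed
  next
    assume P2: "\<forall>i \<in> {1..n}. Lambda G i = F.phi ` F.Z i"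
    have ck: "k \<le> n \<Longrightarrow> card (Lambda G k) = p ^ k" for k
    proof (cases "k = 0")
      case True thus ?thesis by simp
    next
      case False
      assume "k \<le> n"
      hence "k \<in> {1..n}" using False by auto
      thus ?thesis using P2 F.card_V by auto
    qed
    show "\<forall>i \<in> {1..n}. (G\<lparr>carrier := Lambda G i\<rparr> Mod Lambda G (i - 1)) \<cong> integer_mod_group p"
    proof
      fix i assume i: "i \<in> {1..n}"
      have e: "card (carrier (G\<lparr>carrier := Lambda G i\<rparr> Mod Lambda G (i - 1))) * p ^ (i - 1) = p ^ i"
        using quot[OF i] ck[of i] ck[of "i - 1"] i by auto
      have "p ^ i = p * p ^ (i - 1)" using i by (cases i) auto
      hence "card (carrier (G\<lparr>carrier := Lambda G i\<rparr> Mod Lambda G (i - 1))) = p"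
        using e F.p_gt1 by auto
      thus "(G\<lparr>carrier := Lambda G i\<rparr> Mod Lambda G (i - 1)) \<cong> integer_mod_group p"
        using prime_order_iso quot[OF i] p_prime by blast
    qed
  qed
  show ?thesis using I12 I23 P2_iff by blast
qed

end
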